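(* Let $0<\beta\le1$ and let $x$ be real with $0\le\frac{(1+\beta)^2x}{4\beta}<1$. Then $$\lim_{t\to\infty}{}_3F_2\!\left(\begin{matrix}1,\ t\frac{1+\beta}{2}+1,\ t\frac{1+\beta}{2}+\frac12\\ t+1,\ t\beta+1\end{matrix};x\right)=\frac{1}{1-\frac{(1+\beta)^2x}{4\beta}},$$ uniformly on compact subsets of this region.
   Context: ${}_3F_2\!\left(\begin{matrix}a,b,c\\ d,e\end{matrix};x\right)=\sum_{n\ge0}\frac{(a)_n(b)_n(c)_n}{(d)_n(e)_n}\frac{x^n}{n!}$ for $|x|<1$, with $(q)_0=1$, $(q)_n=q(q+1)\cdots(q+n-1)$; $t>0$ is a real parameter tending to $\infty$. *)

theory Defs
  imports "HOL-Analysis.Analysis"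
begin

text \<open>Generalized hypergeometric series 3F2 (real parameters, real argument),
  defined as the sum of the series; meaningful for |x| < 1.\<close>
definition hyp3F2 :: "real \<Rightarrow> real \<Rightarrow> real \<Rightarrow> real \<Rightarrow> real \<Rightarrow> real \<Rightarrow> real" where
  "hyp3F2 a b c d e x =
     (\<Sum>n. (pochhammer a n * pochhammer b n * pochhammer c n)
           / (pochhammer d n * pochhammer e n) * x ^ n / fact n)"

end

theory Submission imports Defs begin

definition cf :: "real \<Rightarrow> real \<Rightarrow> nat \<Rightarrow> real" where
  "cf b t n = pochhammer (t*(1+b)/2+1) n * pochhammer (t*(1+b)/2+1/2) n /
     (pochhammer (t+1) n * pochhammer (t*b+1) n)"

definition rt :: "real \<Rightarrow> real \<Rightarrow> nat \<Rightarrow> real" where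
  "rt b t n = (t*(1+b)/2+1+real n)*(t*(1+b)/2+1/2+real n)/((t+1+real n)*(t*b+1+real n))"

lemma cf_Suc: "0 < b \<Longrightarrow> 0 \<le> t \<Longrightarrow> cf b t (Suc n) = cf b t n * rt b t n"
proof -
  assume "0 < b" "0 \<le> t"
  then have "t*b \<ge> 0" by simp
  then have "t+1+real n > 0" "t*b+1+real n > 0" using \<open>0 \<le> t\<close> by linarith+
  then show ?thesis unfolding cf_def rt_def pochhammer_rec'
    by (simp add: field_simps)
qed

lemma rt_bounds:
  assumes b: "0 < b" and t: "0 \<le> t"
  shows "0 \<le> rt b t n \<and> rt b t n \<le> (1+b)^2/(4*b)"
proof -
  define m where "m = 1 + real n"
  have m: "m \<ge> 1" using m_def by auto
  have sq: "(1+b)^2 = 4*b + (1-b)^2" by (simp add: power2_eq_square algebra_simps)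
  have "4*b \<le> (1+b)^2" unfolding sq by simp
  then have R1: "(1+b)^2/(4*b) \<ge> 1" using b by (simp add: le_divide_eq)
  have tb: "t*b \<ge> 0" using b t by simp
  have d: "(t+m)*(t*b+m) > 0" using tb t m by (intro mult_pos_pos) linarith+
  have num: "(t*(1+b)/2+m)*(t*(1+b)/2+m-1/2) \<le> (t*(1+b)/2+m)^2"
    using b t m by (simp add: power2_eq_square mult_left_mono)
  have "(t*(1+b)/2+m)^2 = t^2*(1+b)^2/4 + t*m*(1+b) + m^2"
    by (simp add: power2_eq_square field_simps)
  also have "\<dots> \<le> t^2*(1+b)^2/4 + (1+b)^2/(4*b)*(t*m*(1+b)) + (1+b)^2/(4*b) * m^2"
  proof -
    have p1: "0 \<le> t*m*(1+b)" using b t m by (auto intro!: mult_nonneg_nonneg)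
    have "1 * (t*m*(1+b)) \<le> (1+b)^2/(4*b)*(t*m*(1+b))" by (rule mult_right_mono[OF R1 p1])
    moreover have "1 * m^2 \<le> (1+b)^2/(4*b) * m^2" by (rule mult_right_mono[OF R1]) simp
    ultimately show ?thesis by linarith
  qed
  also have "\<dots> = (1+b)^2/(4*b) * ((t+m)*(t*b+m))"
    using b by (simp add: power2_eq_square field_simps)
  finally have "(t*(1+b)/2+m)*(t*(1+b)/2+m-1/2) \<le> (1+b)^2/(4*b) * ((t+m)*(t*b+m))"
    using num by linarith
  moreover have "0 \<le> (t*(1+b)/2+m)*(t*(1+b)/2+m-1/2)" 
  proof -
    have "t*(1+b) \<ge> 0" using b t by simp
    then show ?thesis using m by (intro mult_nonneg_nonneg) linarith+
  qed
  ultimately have A: "(t*(1+b)/2+m)*(t*(1+b)/2+m-1/2) \<le> (1+b)^2/(4*b) * ((t+m)*(t*b+m))"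
     and B: "0 \<le> (t*(1+b)/2+m)*(t*(1+b)/2+m-1/2)" by blast+
  have eqrt: "rt b t n = ((t*(1+b)/2+m)*(t*(1+b)/2+m-1/2)) / ((t+m)*(t*b+m))"
    unfolding rt_def m_def by (simp add: algebra_simps)
  show ?thesis unfolding eqrt using A B d
    by (simp add: pos_divide_le_eq)
qed

lemma cf_bounds:
  assumes b: "0 < b" and t: "0 \<le> t"
  shows "0 \<le> cf b t n \<and> cf b t n \<le> ((1+b)^2/(4*b))^n"
proof (induction n)
  case 0 then show ?case by (simp add: cf_def)
next
  case (Suc n)
  have r: "0 \<le> rt b t n" "rt b t n \<le> (1+b)^2/(4*b)" using rt_bounds[OF b t] by auto
  have "cf b t n * rt b t n \<le> ((1+b)^2/(4*b))^n * ((1+b)^2/(4*b))"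
    using Suc r by (intro mult_mono) auto
  then show ?case unfolding cf_Suc[OF b t] using Suc r
    by (auto simp: mult.commute intro!: mult_nonneg_nonneg)
qed

lemma rt_lim:
  assumes b: "0 < b"
  shows "((\<lambda>t. rt b t n) \<longlongrightarrow> (1+b)^2/(4*b)) at_top"
proof -
  have ev: "eventually (\<lambda>t. ((1+b)/2 + (1+real n)*inverse t)*((1+b)/2 + (1/2+real n)*inverse t)
      /((1 + (1+real n)*inverse t)*(b+(1+real n)*inverse t)) = rt b t n) at_top"
    using eventually_gt_at_top[of 0]
  proof eventually_elim
    case (elim t)
    have n: "(t*(1+b)/2+1+real n)*(t*(1+b)/2+1/2+real n) = t^2 * (((1+b)/2 + (1+real n)*inverse t)*((1+b)/2 + (1/2+real n)*inverse t))"
      using elim by (simp add: field_simps power2_eq_square)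
    have d: "(t+1+real n)*(t*b+1+real n) = t^2 * ((1 + (1+real n)*inverse t)*(b+(1+real n)*inverse t))"
      using elim by (simp add: field_simps power2_eq_square)
    show ?case unfolding rt_def n d using elim by simp
  qed
  have i: "((\<lambda>t::real. inverse t) \<longlongrightarrow> 0) at_top"
    by (rule tendsto_inverse_0_at_top) (rule filterlim_ident)
  have lim: "((\<lambda>t. ((1+b)/2 + (1+real n)*inverse t)*((1+b)/2 + (1/2+real n)*inverse t)
      /((1 + (1+real n)*inverse t)*(b+(1+real n)*inverse t))) \<longlongrightarrow>
      ((1+b)/2 + (1+real n)*0)*((1+b)/2 + (1/2+real n)*0)/((1 + (1+real n)*0)*(b+(1+real n)*0))) at_top"
    using b by (intro tendsto_intros i) auto
  have eq: "((1+b)/2 + (1+real n)*0)*((1+b)/2 + (1/2+real n)*0)/((1 + (1+real n)*0)*(b+(1+real n)*0)) = (1+b)^2/(4*b)"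
    by (simp add: power2_eq_square)
  have "((\<lambda>t. ((1+b)/2 + (1+real n)*inverse t)*((1+b)/2 + (1/2+real n)*inverse t)
      /((1 + (1+real n)*inverse t)*(b+(1+real n)*inverse t))) \<longlongrightarrow> (1+b)^2/(4*b)) at_top"
    using lim unfolding eq .
  then show ?thesis using tendsto_cong[OF ev] by blast
qed

lemma cf_lim:
  assumes b: "0 < b"
  shows "((\<lambda>t. cf b t n) \<longlongrightarrow> ((1+b)^2/(4*b))^n) at_top"
proof (induction n)
  case 0 then show ?case by (simp add: cf_def)
next
  case (Suc n)
  have "((\<lambda>t. cf b t n * rt b t n) \<longlongrightarrow> ((1+b)^2/(4*b))^n * ((1+b)^2/(4*b))) at_top"
    by (intro tendsto_mult Suc rt_lim b)
  moreover have "eventually (\<lambda>t. cf b t n * rt b t n = cf b t (Suc n)) at_top"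
    using eventually_ge_at_top[of 0] by eventually_elim (simp add: cf_Suc[OF b])
  ultimately show ?case using tendsto_cong by (force simp: mult.commute)
qed

lemma hyp_eq: "hyp3F2 1 (t*(1+b)/2 + 1) (t*(1+b)/2 + 1/2) (t + 1) (t*b + 1) x = (\<Sum>n. cf b t n * x^n)"
  unfolding hyp3F2_def cf_def pochhammer_fact[symmetric] by (simp add: mult.assoc)

lemma unif_main:
  assumes b: "0 < b" and y0: "0 \<le> y0" "y0 < 1"
  shows "uniform_limit {x. 0 \<le> x \<and> (1+b)^2 * x / (4*b) \<le> y0}
     (\<lambda>t x. hyp3F2 1 (t*(1+b)/2 + 1) (t*(1+b)/2 + 1/2) (t + 1) (t*b + 1) x)
     (\<lambda>x. 1 / (1 - (1+b)^2 * x / (4*b))) at_top"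
proof -
  define R where "R = (1+b)^2/(4*b)"
  have R: "R > 0" unfolding R_def using b by (simp add: add_pos_nonneg)
  define M where "M = y0 / R"
  have M: "M \<ge> 0" "R * M = y0" using R y0 unfolding M_def by auto
  define a where "a k t = \<bar>cf b t k - R^k\<bar> * M^k" for k t
  have sg: "summable (\<lambda>k. 2 * y0^k)" using y0 by (intro summable_mult summable_geometric) auto
  have abound: "norm (a k t) \<le> 2 * y0^k" if t: "t \<ge> 0" for k t
  proof -
    have c: "0 \<le> cf b t k" "cf b t k \<le> R^k" using cf_bounds[OF b t] unfolding R_def by auto
    have "\<bar>cf b t k - R^k\<bar> \<le> 2 * R^k" using c by auto
    then have "\<bar>cf b t k - R^k\<bar> * M^k \<le> 2 * R^k * M^k" using M by (intro mult_right_mono) auto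
    also have "\<dots> = 2 * y0^k" using M by (simp add: power_mult_distrib[symmetric])
    finally show ?thesis unfolding a_def using M by simp
  qed
  have T: "((\<lambda>t. suminf (\<lambda>k. a k t)) \<longlongrightarrow> suminf (\<lambda>k. 0::real)) at_top"
  proof (rule tannerys_theorem[THEN conjunct2, THEN conjunct2])
    show "((\<lambda>t. a k t) \<longlongrightarrow> 0) at_top" for k
    proof -
      have "((\<lambda>t. \<bar>cf b t k - R^k\<bar> * M^k) \<longlongrightarrow> \<bar>R^k - R^k\<bar> * M^k) at_top"
        unfolding R_def by (intro tendsto_intros cf_lim b)
      then show ?thesis unfolding a_def by simp
    qed
    show "eventually (\<lambda>(k,t). norm (a k t) \<le> 2 * y0^k) (at_top \<times>\<^sub>F at_top)"
      unfolding eventually_prod_filter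
      by (rule exI[of _ "\<lambda>_. True"], rule exI[of _ "\<lambda>t. t \<ge> 0"]) (use abound in \<open>auto simp: real_norm_def\<close>)
  qed (use sg in auto)
  then have T0: "((\<lambda>t. suminf (\<lambda>k. a k t)) \<longlongrightarrow> 0) at_top" by simp
  show ?thesis
  proof (rule uniform_limitI)
    fix e :: real assume e: "e > 0"
    have "eventually (\<lambda>t. suminf (\<lambda>k. a k t) < e) at_top"
      using order_tendstoD(2)[OF T0 e] .
    then show "eventually (\<lambda>t. \<forall>x\<in>{x. 0 \<le> x \<and> (1+b)^2 * x / (4*b) \<le> y0}.
       dist (hyp3F2 1 (t*(1+b)/2 + 1) (t*(1+b)/2 + 1/2) (t + 1) (t*b + 1) x) (1 / (1 - (1+b)^2 * x / (4*b)))  < e) at_top"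
      using eventually_ge_at_top[of 0]
    proof eventually_elim
      case (elim t)
      show ?case
      proof
        fix x assume "x \<in> {x. 0 \<le> x \<and> (1+b)^2 * x / (4*b) \<le> y0}"
        then have x: "0 \<le> x" "R * x \<le> y0" unfolding R_def by auto
        have xM: "x \<le> M" using x R M by (metis mult_le_cancel_left_pos)
        have Rx: "0 \<le> R*x" "R*x < 1" using x y0 R by auto
        have c: "0 \<le> cf b t k" "cf b t k \<le> R^k" for k using cf_bounds[OF b elim(2)] unfolding R_def by auto
        have s1: "summable (\<lambda>k. cf b t k * x^k)"
        proof (rule summable_comparison_test[OF _ summable_geometric[of "R*x"]])
          show "\<exists>N. \<forall>n\<ge>N. norm (cf b t n * x^n) \<le> (R*x)^n"
            using c x by (auto simp: power_mult_distrib intro!: mult_right_mono)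
        qed (use Rx in auto)
        have s2: "summable (\<lambda>k. (R*x)^k)" using Rx by (intro summable_geometric) auto
        have g: "1 / (1 - (1+b)^2 * x / (4*b)) = (\<Sum>k. (R*x)^k)"
          using suminf_geometric[of "R*x"] Rx unfolding R_def by auto
        have sa: "summable (\<lambda>k. a k t)"
          by (rule summable_comparison_test[OF _ sg]) (use abound elim(2) in auto)
        have d: "(\<Sum>k. cf b t k * x^k) - (\<Sum>k. (R*x)^k) = (\<Sum>k. (cf b t k - R^k) * x^k)"
          using suminf_diff[OF s1 s2] by (simp add: power_mult_distrib algebra_simps)
        have le: "\<bar>(cf b t k - R^k) * x^k\<bar> \<le> a k t" for k
          unfolding a_def abs_mult using x xM
          by (intro mult_left_mono) (auto intro!: power_mono)
        have sd: "summable (\<lambda>k. \<bar>(cf b t k - R^k) * x^k\<bar>)"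
          by (rule summable_comparison_test[OF _ sa]) (use le in auto)
        have "\<bar>\<Sum>k. (cf b t k - R^k) * x^k\<bar> \<le> (\<Sum>k. \<bar>(cf b t k - R^k) * x^k\<bar>)"
          by (rule summable_rabs[OF sd])
        also have "\<dots> \<le> (\<Sum>k. a k t)" by (rule suminf_le[OF le sd sa])
        finally show "dist (hyp3F2 1 (t*(1+b)/2 + 1) (t*(1+b)/2 + 1/2) (t + 1) (t*b + 1) x) (1 / (1 - (1+b)^2 * x / (4*b))) < e"
          unfolding hyp_eq g dist_real_def d using elim(1) by linarith
      qed
    qed
  qed
qed

theorem corollary1:
  fixes \<beta> :: real
  assumes "0 < \<beta>" and "\<beta> \<le> 1"
  shows "(\<forall>x::real. 0 \<le> (1+\<beta>)^2 * x / (4*\<beta>) \<and> (1+\<beta>)^2 * x / (4*\<beta>) < 1 \<longrightarrow>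
           ((\<lambda>t. hyp3F2 1 (t*(1+\<beta>)/2 + 1) (t*(1+\<beta>)/2 + 1/2) (t + 1) (t*\<beta> + 1) x)
              \<longlongrightarrow> 1 / (1 - (1+\<beta>)^2 * x / (4*\<beta>))) at_top) \<and>
         (\<forall>K::real set. compact K \<and>
           K \<subseteq> {x. 0 \<le> (1+\<beta>)^2 * x / (4*\<beta>) \<and> (1+\<beta>)^2 * x / (4*\<beta>) < 1} \<longrightarrow>
           uniform_limit K
             (\<lambda>t x. hyp3F2 1 (t*(1+\<beta>)/2 + 1) (t*(1+\<beta>)/2 + 1/2) (t + 1) (t*\<beta> + 1) x)
             (\<lambda>x. 1 / (1 - (1+\<beta>)^2 * x / (4*\<beta>))) at_top)"
proof -
  have U: "uniform_limit K
             (\<lambda>t x. hyp3F2 1 (t*(1+\<beta>)/2 + 1) (t*(1+\<beta>)/2 + 1/2) (t + 1) (t*\<beta> + 1) x)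
             (\<lambda>x. 1 / (1 - (1+\<beta>)^2 * x / (4*\<beta>))) at_top"
    if K: "compact K" "K \<subseteq> {x. 0 \<le> (1+\<beta>)^2 * x / (4*\<beta>) \<and> (1+\<beta>)^2 * x / (4*\<beta>) < 1}" for K
  proof (cases "K = {}")
    case True then show ?thesis by (intro uniform_limitI) auto
  next
    case False
    obtain xm where xm: "xm \<in> K" "\<And>y. y \<in> K \<Longrightarrow> y \<le> xm"
      using compact_attains_sup[OF K(1) False] by blast
    have pos: "(1+\<beta>)^2 > 0" "4*\<beta> > 0" using assms by (auto simp: add_pos_nonneg)
    have sub: "K \<subseteq> {x. 0 \<le> x \<and> (1+\<beta>)^2 * x / (4*\<beta>) \<le> (1+\<beta>)^2 * xm / (4*\<beta>)}"
    proof
      fix x assume x: "x \<in> K"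
      then have "0 \<le> (1+\<beta>)^2 * x / (4*\<beta>)" using K(2) by auto
      then have "0 \<le> x" using pos by (simp add: zero_le_divide_iff zero_le_mult_iff)
      moreover have "(1+\<beta>)^2 * x / (4*\<beta>) \<le> (1+\<beta>)^2 * xm / (4*\<beta>)"
        using xm(2)[OF x] pos by (intro divide_right_mono mult_left_mono) auto
      ultimately show "x \<in> {x. 0 \<le> x \<and> (1+\<beta>)^2 * x / (4*\<beta>) \<le> (1+\<beta>)^2 * xm / (4*\<beta>)}" by simp
    qed
    have y0: "0 \<le> (1+\<beta>)^2 * xm / (4*\<beta>)" "(1+\<beta>)^2 * xm / (4*\<beta>) < 1" using xm(1) K(2) by auto
    show ?thesis by (rule uniform_limit_on_subset[OF unif_main[OF assms(1) y0] sub])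
  qed
  show ?thesis
  proof (intro conjI allI impI)
    fix x :: real assume x: "0 \<le> (1+\<beta>)^2 * x / (4*\<beta>) \<and> (1+\<beta>)^2 * x / (4*\<beta>) < 1"
    have "uniform_limit {x}
             (\<lambda>t x. hyp3F2 1 (t*(1+\<beta>)/2 + 1) (t*(1+\<beta>)/2 + 1/2) (t + 1) (t*\<beta> + 1) x)
             (\<lambda>x. 1 / (1 - (1+\<beta>)^2 * x / (4*\<beta>))) at_top"
      using x by (intro U) auto
    from tendsto_uniform_limitI[OF this] show "((\<lambda>t. hyp3F2 1 (t*(1+\<beta>)/2 + 1) (t*(1+\<beta>)/2 + 1/2) (t + 1) (t*\<beta> + 1) x)
              \<longlongrightarrow> 1 / (1 - (1+\<beta>)^2 * x / (4*\<beta>))) at_top" by simp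
  next
    fix K :: "real set"
    assume "compact K \<and> K \<subseteq> {x. 0 \<le> (1+\<beta>)^2 * x / (4*\<beta>) \<and> (1+\<beta>)^2 * x / (4*\<beta>) < 1}"
    then show "uniform_limit K
             (\<lambda>t x. hyp3F2 1 (t*(1+\<beta>)/2 + 1) (t*(1+\<beta>)/2 + 1/2) (t + 1) (t*\<beta> + 1) x)
             (\<lambda>x. 1 / (1 - (1+\<beta>)^2 * x / (4*\<beta>))) at_top" using U by blast
  qed
qed

end
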